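(* For any $\epsilon>0$ there exist $c,n_0>0$ depending on $\epsilon$ such that for all $n\ge n_0$ and every $y\in\mathbb{S}^{n-1}$, \[\mathbb{P}\big[\|yQ_n\|_2\le c\sqrt{n}\big]\le(1/2+\epsilon)^n.\]
   Context: $Q_n$ is an $n\times n$ random matrix with independent rows, each uniform on the vectors of $\{0,1\}^n$ with coordinate sum $\lfloor n/2\rfloor$; $yQ_n$ denotes the row vector $y$ times $Q_n$. $\mathbb{S}^{n-1}$ is the Euclidean unit sphere in $\mathbb{R}^n$. *)

theory Defs
  imports "HOL-Probability.Probability"
begin

text \<open>Vectors in R^n are functions nat => real, only indices 0..n-1 matter.
  The admissible rows: 0/1-vectors of length n with coordinate sum floor(n/2)
  (coordinates outside {0..<n} are set to 0).\<close>
definition bal_rows :: "nat \<Rightarrow> (nat \<Rightarrow> real) set" where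
  "bal_rows n = {v. (\<forall>j<n. v j \<in> {0, 1}) \<and> (\<forall>j\<ge>n. v j = 0)
                    \<and> (\<Sum>j<n. v j) = real (n div 2)}"

definition random_Q :: "nat \<Rightarrow> (nat \<Rightarrow> nat \<Rightarrow> real) pmf" where
  "random_Q n = Pi_pmf {..<n} (\<lambda>_. 0) (\<lambda>_. pmf_of_set (bal_rows n))"

definition vecmat :: "nat \<Rightarrow> (nat \<Rightarrow> real) \<Rightarrow> (nat \<Rightarrow> nat \<Rightarrow> real) \<Rightarrow> nat \<Rightarrow> real" where
  "vecmat n y Q = (\<lambda>j. \<Sum>i<n. y i * Q i j)"

definition l2norm :: "nat \<Rightarrow> (nat \<Rightarrow> real) \<Rightarrow> real" where
  "l2norm n v = sqrt (\<Sum>j<n. (v j)\<^sup>2)"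

end

theory Submission
  imports Defs
begin

lemma cb_odd: "Suc k * ((2*k+1) choose k) = (2*k+1) * ((2*k) choose k)"
proof -
  have 1: "Suc k * (Suc (2*k) choose Suc k) = Suc k * (Suc (2*k) choose k)"
    unfolding mult_2 by (rule Suc_times_binomial_add)
  have 2: "Suc k * (Suc (2*k) choose Suc k) = Suc (2*k) * ((2*k) choose k)"
    by (rule Suc_times_binomial)
  have e: "2*k+1 = Suc (2*k)" by simp
  show ?thesis unfolding e by (simp only: 1[symmetric] 2)
qed

lemma cb_rec: "Suc k * ((2*k+2) choose (k+1)) = 2*(2*k+1) * ((2*k) choose k)"
proof -
  define X where "X = (Suc (Suc (2*k)) choose Suc k)"
  define Y where "Y = (Suc (2*k) choose k)"
  define Z where "Z = ((2*k) choose k)"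
  have 2: "Suc k * X = Suc (Suc (2*k)) * Y" unfolding X_def Y_def by (rule Suc_times_binomial)
  have o: "Suc k * Y = Suc (2*k) * Z" unfolding Y_def Z_def using cb_odd[of k] by simp
  have s: "Suc (Suc (2*k)) = 2 * Suc k" by simp
  have "Suc k * (Suc k * X) = Suc k * (2 * Suc (2*k) * Z)"
  proof -
    have "Suc k * (Suc k * X) = Suc (Suc (2*k)) * (Suc k * Y)" unfolding 2 by (simp only: ac_simps)
    also have "\<dots> = Suc (Suc (2*k)) * (Suc (2*k) * Z)" unfolding o ..
    also have "\<dots> = Suc k * (2 * Suc (2*k) * Z)" unfolding s by (simp only: ac_simps)
    finally show ?thesis .
  qed
  then have "Suc k * X = 2 * Suc (2*k) * Z" by (subst (asm) mult_left_cancel) auto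
  moreover have "(2*k+2) choose (k+1) = X" unfolding X_def by simp
  ultimately show ?thesis unfolding Z_def by simp
qed

lemma aux1: "k1 > 0 \<Longrightarrow> (b*a/k1)^2*(8*k1) = a^2*(8*b^2)/(k1::real)"
  by (simp add: power2_eq_square field_simps)

lemma cb_even_bounds:
  "16^k \<le> real ((2*k) choose k)^2 * (4*k+1) \<and> real ((2*k) choose k)^2 * (2*k+1) \<le> 16^k"
proof (induction k)
  case 0 then show ?case by simp
next
  case (Suc k)
  define a where "a = real ((2*k) choose k)"
  define b where "b = real ((2*(Suc k)) choose (Suc k))"
  have rec: "real (Suc k) * b = 2*(2*k+1) * a"
    using arg_cong[OF cb_rec[of k], of real] unfolding a_def b_def
    by (simp add: algebra_simps)
  have b: "b = 2*(2*k+1)*a / (k+1)" using rec by (simp add: field_simps)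
  have IH1: "16^k \<le> a^2*(4*k+1)" and IH2: "a^2*(2*k+1) \<le> 16^k" using Suc.IH unfolding a_def by auto
  have b2: "b^2 = 4*(2*k+1)^2*a^2/(k+1)^2" unfolding b by (simp add: power2_eq_square field_simps)
  have "16^Suc k \<le> b^2 * (4*Suc k+1)"
  proof -
    have "16^Suc k = 16 * 16^k" by simp
    also have "\<dots> \<le> 16 * (a^2*(4*k+1))" using IH1 by simp
    also have "\<dots> \<le> b^2 * (4*Suc k+1)"
    proof -
      have "16 * (a^2*(4*k+1)) * (k+1)^2 \<le> 4*(2*k+1)^2*a^2 * (4*k+5)"
      proof -
        have "16*(4*k+1)*(k+1)^2 \<le> 4*(2*k+1)^2*(4*k+5::real)" by (simp add: power2_eq_square algebra_simps)
        then have "a^2 * (16*(4*k+1)*(k+1)^2) \<le> a^2 * (4*(2*k+1)^2*(4*k+5::real))"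
          by (intro mult_left_mono) auto
        then show ?thesis by (simp add: algebra_simps)
      qed
      then show ?thesis unfolding b2 by (simp add: field_simps)
    qed
    finally show ?thesis .
  qed
  moreover have "b^2 * (2*Suc k+1) \<le> 16^Suc k"
  proof -
    have "b^2 * (2*Suc k+1) = 4*(2*k+1)^2*a^2*(2*k+3)/(k+1)^2" unfolding b2 by (simp add: field_simps)
    also have "\<dots> \<le> 16 * 16^k"
    proof -
      have "4*(2*k+1)^2*a^2*(2*k+3) = 4*(a^2*(2*k+1))*((2*k+1)*(2*k+3))" by (simp add: power2_eq_square algebra_simps)
      also have "\<dots> \<le> 4*(16^k*(4*(k+1)^2::real))"
      proof -
        have "(a^2*(2*k+1))*((2*k+1)*(2*k+3)) \<le> 16^k*(4*(k+1)^2::real)"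
          using IH2 by (intro mult_mono) (auto simp: power2_eq_square algebra_simps)
        then show ?thesis by (simp add: ac_simps)
      qed
      finally show ?thesis by (simp add: field_simps)
    qed
    finally show ?thesis by simp
  qed
  ultimately show ?case unfolding b_def by simp
qed

lemma cb_lower: "4^n \<le> real (n choose (n div 2))^2 * (4*n+4)"
proof (cases "even n")
  case True
  then obtain k where n: "n = 2*k" by blast
  have "(4::real)^n = 16^k" by (simp add: n power_mult)
  also have "\<dots> \<le> real ((2*k) choose k)^2 * (4*k+1)" using cb_even_bounds by blast
  also have "\<dots> \<le> real ((2*k) choose k)^2 * (4*n+4)" by (intro mult_left_mono) (auto simp: n)
  finally show ?thesis by (simp add: n)
next
  case False
  then obtain k where n: "n = 2*k+1" using oddE by blast
  have nd: "n div 2 = k" by (simp add: n)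
  define a where "a = real ((2*k) choose k)"
  have o: "real (Suc k) * real (n choose k) = (2*k+1) * a"
    unfolding a_def n by (metis cb_odd of_nat_mult of_nat_add of_nat_1 of_nat_mult of_nat_numeral)
  have c: "real (n choose k) = (2*k+1)*a/(k+1)" using o by (simp add: field_simps)
  have IH1: "16^k \<le> a^2*(4*k+1)" using cb_even_bounds unfolding a_def by blast
  have "(4::real)^n = 4*16^k" by (simp add: n power_mult power_add)
  also have "\<dots> \<le> 4*(a^2*(4*k+1))" using IH1 by simp
  also have "\<dots> \<le> ((2*k+1)*a/(k+1))^2 * (8*k+8)"
  proof -
    have "4*(4*k+1)*(k+1) \<le> (8*(2*k+1)^2::real)" by (simp add: power2_eq_square algebra_simps)
    then have 1: "a^2*(4*(4*k+1)*(k+1)) \<le> a^2*(8*(2*k+1)^2)" by (intro mult_left_mono) auto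
    have 2: "((2*k+1)*a/(k+1))^2 * (8*k+8) = a^2*(8*(2*k+1)^2)/(k+1)"
      using aux1[of "real k + 1" "2*k+1" a] by (simp add: algebra_simps)
    have 3: "4*(a^2*(4*k+1)) = a^2*(4*(4*k+1)*(k+1)) / (k+1)" by (simp add: field_simps)
    show ?thesis unfolding 2 3 using 1 by (intro divide_right_mono) auto
  qed
  finally show ?thesis unfolding nd c by (simp add: n algebra_simps)
qed

lemma cb_upper: assumes "m \<ge> 1" shows "real (m choose (m div 2))^2 * m \<le> 4^m"
proof (cases "even m")
  case True
  then obtain k where n: "m = 2*k" by blast
  have nd: "m div 2 = k" by (simp add: n)
  have "real (m choose (m div 2))^2 * m = real ((2*k) choose k)^2 * (2*k)" by (simp add: n)
  also have "\<dots> \<le> real ((2*k) choose k)^2 * (2*k+1)"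
    by (intro mult_left_mono) auto
  also have "\<dots> \<le> 16^k" using cb_even_bounds by blast
  finally show ?thesis by (simp add: n power_mult)
next
  case False
  then obtain k where n: "m = 2*k+1" using oddE by blast
  have nd: "m div 2 = k" by (simp add: n)
  define a where "a = real ((2*k) choose k)"
  have o: "real (Suc k) * real (m choose k) = (2*k+1) * a"
    unfolding a_def n by (metis cb_odd of_nat_mult of_nat_add of_nat_1 of_nat_mult of_nat_numeral)
  have c: "real (m choose k) = (2*k+1)*a/(k+1)" using o by (simp add: field_simps)
  have IH2: "a^2*(2*k+1) \<le> 16^k" using cb_even_bounds unfolding a_def by blast
  have "((2*k+1)*a/(k+1))^2 * (2*k+1) = (a^2*(2*k+1)) * ((2*k+1)^2/(k+1)^2)"
    by (simp add: power2_eq_square field_simps)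
  also have "\<dots> \<le> 16^k * 4"
  proof (intro mult_mono)
    have "(2*k+1)^2 \<le> 4*(k+1::real)^2" by (simp add: power2_eq_square algebra_simps)
    then show "(2*k+1)^2/(k+1)^2 \<le> (4::real)" by (simp add: divide_le_eq)
  qed (use IH2 in auto)
  finally show ?thesis unfolding nd c by (simp add: n power_mult power_add)
qed
abbreviation V :: "nat \<Rightarrow> (nat \<Rightarrow> real) set" where "V n \<equiv> PiE_dflt {..<n} (0::real) (\<lambda>_. {0,1})"

lemma V_ind: assumes "x \<in> V n" shows "x = (\<lambda>j. if j \<in> {j. j<n \<and> x j = 1} then 1 else 0)"
  using assms by (auto simp: PiE_dflt_def fun_eq_iff)

lemma V_sum: assumes "x \<in> V n" shows "(\<Sum>j<n. x j) = real (card {j. j<n \<and> x j = 1})"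
proof -
  have "(\<Sum>j<n. x j) = (\<Sum>j<n. if j \<in> {j. j<n \<and> x j = 1} then 1 else 0)"
    using assms by (intro sum.cong) (auto simp: PiE_dflt_def)
  also have "\<dots> = real (card ({..<n} \<inter> {j. j<n \<and> x j = 1}))"
    by (subst sum.If_cases) auto
  also have "{..<n} \<inter> {j. j<n \<and> x j = 1} = {j. j<n \<and> x j = 1}" by auto
  finally show ?thesis .
qed

lemma bal_sub: "bal_rows n \<subseteq> V n"
  by (auto simp: bal_rows_def PiE_dflt_def)

lemma finite_V: "finite (V n)" by (rule finite_PiE_dflt) auto

lemma card_V: "card (V n) = 2^n"
  by (subst card_PiE_dflt) (auto simp: numeral_2_eq_2)

lemma finite_bal: "finite (bal_rows n)"
  using bal_sub finite_V finite_subset by blast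

lemma bal_image: "bal_rows n = (\<lambda>K j. if j \<in> K then (1::real) else 0) ` {K. K \<subseteq> {..<n} \<and> card K = n div 2}"
proof (intro equalityI subsetI)
  fix x assume x: "x \<in> bal_rows n"
  then have xV: "x \<in> V n" using bal_sub by blast
  have "card {j. j<n \<and> x j = 1} = n div 2"
    using x V_sum[OF xV] by (simp add: bal_rows_def)
  then show "x \<in> (\<lambda>K j. if j \<in> K then (1::real) else 0) ` {K. K \<subseteq> {..<n} \<and> card K = n div 2}"
    using V_ind[OF xV] by (intro image_eqI[where x="{j. j<n \<and> x j = 1}"]) auto
next
  fix x assume "x \<in> (\<lambda>K j. if j \<in> K then (1::real) else 0) ` {K. K \<subseteq> {..<n} \<and> card K = n div 2}"
  then obtain K where K: "K \<subseteq> {..<n}" "card K = n div 2" and x: "x = (\<lambda>j. if j \<in> K then 1 else 0)" by auto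
  have "(\<Sum>j<n. x j) = real (card ({..<n} \<inter> K))" unfolding x by (subst sum.If_cases) auto
  also have "{..<n} \<inter> K = K" using K by auto
  finally show "x \<in> bal_rows n" using K unfolding bal_rows_def x by auto
qed

lemma card_bal: "card (bal_rows n) = n choose (n div 2)"
proof -
  have "card (bal_rows n) = card {K. K \<subseteq> {..<n} \<and> card K = n div 2}"
    unfolding bal_image by (intro card_image inj_onI) (auto simp: fun_eq_iff split: if_splits)
  also have "\<dots> = n choose (n div 2)" by (subst n_subsets) auto
  finally show ?thesis .
qed

lemma bal_ne: "bal_rows n \<noteq> {}"
  using card_bal[of n] by auto

abbreviation MM :: "nat \<Rightarrow> (nat \<Rightarrow> nat \<Rightarrow> real) set" where "MM n \<equiv> PiE_dflt {..<n} (\<lambda>_. 0::real) (\<lambda>_. bal_rows n)"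

lemma card_MM: "card (MM n) = (n choose (n div 2))^n"
  by (subst card_PiE_dflt) (auto simp: card_bal finite_bal)

lemma finite_MM: "finite (MM n)"
  using finite_bal by auto

lemma Q_pmf: "random_Q n = pmf_of_set (MM n)"
proof (rule pmf_eqI)
  fix f :: "nat \<Rightarrow> nat \<Rightarrow> real"
  have ne: "MM n \<noteq> {}" using bal_ne by auto
  have cpos: "card (bal_rows n) > 0" using finite_bal bal_ne by (simp add: card_gt_0_iff)
  show "pmf (random_Q n) f = pmf (pmf_of_set (MM n)) f"
  proof (cases "f \<in> MM n")
    case True
    then have "pmf (random_Q n) f = (\<Prod>x<n. 1 / real (card (bal_rows n)))"
      unfolding random_Q_def using finite_bal bal_ne
      by (subst pmf_Pi) (auto simp: PiE_dflt_def intro!: prod.cong)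
    also have "\<dots> = 1 / real (card (MM n))"
      by (simp add: card_MM card_bal power_one_over)
    finally show ?thesis using True ne finite_MM by simp
  next
    case False
    have "pmf (random_Q n) f = 0"
    proof (cases "\<forall>x. x \<notin> {..<n} \<longrightarrow> f x = (\<lambda>_. 0)")
      case True
      then obtain x where x: "x < n" "f x \<notin> bal_rows n" using False by (auto simp: PiE_dflt_def)
      have "(\<Prod>i\<in>{..<n}. pmf (pmf_of_set (bal_rows n)) (f i)) = 0"
        using x finite_bal bal_ne by (intro prod_zero bexI[of _ x]) auto
      then show ?thesis unfolding random_Q_def by (subst pmf_Pi) auto
    next
      case False
      then show ?thesis unfolding random_Q_def by (subst pmf_Pi) auto
    qed
    then show ?thesis using False ne finite_MM by simp
  qed
qed

lemma prob_Q: "measure_pmf.prob (random_Q n) E = card (MM n \<inter> E) / real (n choose (n div 2))^n"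
  unfolding Q_pmf using finite_MM bal_ne
  by (subst measure_pmf_of_set) (auto simp: card_MM)

lemma card_fiber_le:
  assumes "finite A" "f ` A \<subseteq> C" "finite C" "\<And>c. c \<in> C \<Longrightarrow> card {a\<in>A. f a = c} \<le> k"
  shows "card A \<le> card C * k"
proof -
  have "A = (\<Union>c\<in>C. {a\<in>A. f a = c})" using assms(2) by auto
  then have "card A \<le> (\<Sum>c\<in>C. card {a\<in>A. f a = c})"
    by (metis card_UN_le assms(3))
  also have "\<dots> \<le> (\<Sum>c\<in>C. k)" by (intro sum_mono assms(4))
  finally show ?thesis by simp
qed
lemma cos_lower2_pos: assumes "(u::real) \<ge> 0" shows "1 - u^2/2 \<le> cos u"
proof -
  let ?f = "\<lambda>u. cos u - 1 + u^2/2"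
  have "?f 0 \<le> ?f u"
  proof (rule DERIV_nonneg_imp_nondecreasing[OF assms])
    fix x :: real assume "0 \<le> x" "x \<le> u"
    show "\<exists>y. DERIV ?f x :> y \<and> y \<ge> 0"
      by (rule exI[of _ "- sin x + x"]) (auto intro!: derivative_eq_intros simp: sin_x_le_x \<open>0 \<le> x\<close>)
  qed
  then show ?thesis by simp
qed

lemma cos_lower2: "1 - (u::real)^2/2 \<le> cos u"
proof (cases "u \<ge> 0")
  case True then show ?thesis by (rule cos_lower2_pos)
next
  case False
  then have "1 - (-u)^2/2 \<le> cos (-u)" by (intro cos_lower2_pos) auto
  then show ?thesis by simp
qed

lemma sin_lower3_pos: assumes "(u::real) \<ge> 0" shows "u - u^3/6 \<le> sin u"
proof -
  let ?f = "\<lambda>u. sin u - u + u^3/6"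
  have "?f 0 \<le> ?f u"
  proof (rule DERIV_nonneg_imp_nondecreasing[OF assms])
    fix x :: real assume "0 \<le> x" "x \<le> u"
    show "\<exists>y. DERIV ?f x :> y \<and> y \<ge> 0"
      by (rule exI[of _ "cos x - 1 + x^2/2"]) (use cos_lower2[of x] in \<open>auto intro!: derivative_eq_intros simp: algebra_simps power2_eq_square power3_eq_cube\<close>)
  qed
  then show ?thesis by simp
qed

lemma cos_upper4_pos: assumes "(u::real) \<ge> 0" shows "cos u \<le> 1 - u^2/2 + u^4/24"
proof -
  let ?f = "\<lambda>u. 1 - u^2/2 + u^4/24 - cos u"
  have "?f 0 \<le> ?f u"
  proof (rule DERIV_nonneg_imp_nondecreasing[OF assms])
    fix x :: real assume x: "0 \<le> x" "x \<le> u"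
    show "\<exists>y. DERIV ?f x :> y \<and> y \<ge> 0"
      by (rule exI[of _ "- x + x^3/6 + sin x"]) (use sin_lower3_pos[OF x(1)] in \<open>auto intro!: derivative_eq_intros simp: algebra_simps power2_eq_square power3_eq_cube eval_nat_numeral\<close>)
  qed
  then show ?thesis by simp
qed

lemma cos_upper4: "cos (u::real) \<le> 1 - u^2/2 + u^4/24"
proof (cases "u \<ge> 0")
  case True then show ?thesis by (rule cos_upper4_pos)
next
  case False
  then have "cos (-u) \<le> 1 - (-u)^2/2 + (-u)^4/24" by (intro cos_upper4_pos) auto
  then show ?thesis by simp
qed

lemma abs_cos_le_exp: assumes "\<bar>u::real\<bar> \<le> 1" shows "\<bar>cos u\<bar> \<le> exp (-(u^2/3))"
proof -
  have "pi/2 > 1" using pi_gt3 by simp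
  then have "cos u \<ge> 0" using assms by (intro cos_ge_zero) auto
  have u2: "u^2 \<le> 1" using assms by (metis abs_le_square_iff abs_one power_one)
  have "u^4 = u^2*u^2" by (simp add: power2_eq_square eval_nat_numeral)
  also have "\<dots> \<le> u^2" by (rule mult_left_le[OF u2]) simp
  finally have "cos u \<le> 1 - u^2/3" using cos_upper4[of u] zero_le_power2[of u] by linarith
  also have "\<dots> \<le> exp (-(u^2/3))" using exp_ge_add_one_self[of "-(u^2/3)"] by simp
  finally show ?thesis using \<open>cos u \<ge> 0\<close> by simp
qed

lemma ftc_real:
  fixes F f :: "real \<Rightarrow> real"
  assumes "a \<le> b" "\<And>x. (F has_real_derivative f x) (at x)"
  shows "(f has_integral (F b - F a)) {a..b}"
  by (intro fundamental_theorem_of_calculus assms(1))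
     (auto simp: has_real_derivative_iff_has_vector_derivative[symmetric] intro: DERIV_subset assms(2))
lemma V_Suc_eq: "V (Suc n) = V n \<union> (\<lambda>x. x(n:=1)) ` V n"
proof (intro equalityI subsetI)
  fix x assume x: "x \<in> V (Suc n)"
  show "x \<in> V n \<union> (\<lambda>x. x(n:=1)) ` V n"
  proof (cases "x n = 0")
    case True then have "x \<in> V n" using x by (auto simp: PiE_dflt_def less_Suc_eq)
    then show ?thesis by blast
  next
    case False then have "x n = 1" using x by (auto simp: PiE_dflt_def)
    then have "x = (x(n:=0))(n:=1)" by auto
    moreover have "x(n:=0) \<in> V n" using x by (auto simp: PiE_dflt_def less_Suc_eq)
    ultimately show ?thesis by blast
  qed
next
  fix x assume "x \<in> V n \<union> (\<lambda>x. x(n:=1)) ` V n"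
  then consider "x \<in> V n" | x' where "x' \<in> V n" "x = x'(n:=1)" by blast
  then show "x \<in> V (Suc n)"
  proof cases
    case 1
    then have H: "\<And>j. (j < n \<longrightarrow> x j \<in> {0,1}) \<and> (\<not> j < n \<longrightarrow> x j = 0)"
      unfolding PiE_dflt_def by simp
    show ?thesis unfolding PiE_dflt_def mem_Collect_eq lessThan_iff
    proof (intro allI conjI impI)
      fix j assume "j < Suc n" then show "x j \<in> {0,1}" using H[of j] by (cases "j < n") auto
    next
      fix j assume "\<not> j < Suc n" then show "x j = 0" using H[of j] by simp
    qed
  next
    case 2
    then have H: "\<And>j. (j < n \<longrightarrow> x' j \<in> {0,1}) \<and> (\<not> j < n \<longrightarrow> x' j = 0)"
      unfolding PiE_dflt_def by simp
    show ?thesis unfolding PiE_dflt_def mem_Collect_eq lessThan_iff \<open>x = x'(n:=1)\<close>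
    proof (intro allI conjI impI)
      fix j assume "j < Suc n" then show "(x'(n:=1)) j \<in> {0,1}" using H[of j] by (cases "j < n") auto
    next
      fix j assume "\<not> j < Suc n" then show "(x'(n:=1)) j = 0" using H[of j] by simp
    qed
  qed
qed

lemma sum_V_Suc: "(\<Sum>x\<in>V (Suc n). f x) = (\<Sum>x\<in>V n. f x + f (x(n:=1)))"
proof -
  have disj: "V n \<inter> (\<lambda>x. x(n:=1)) ` V n = {}"
  proof -
    { fix x assume x: "x \<in> V n" "x \<in> (\<lambda>x. x(n:=1)) ` V n"
      then obtain x' where "x = x'(n:=1)" by auto
      then have "x n = 1" by simp
      moreover have "x n = 0" using x(1) by (simp add: PiE_dflt_def)
      ultimately have False by simp }
    then show ?thesis by blast
  qed
  have inj: "inj_on (\<lambda>x. x(n:=1)) (V n)"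
  proof (rule inj_onI)
    fix x x' assume x: "x \<in> V n" "x' \<in> V n" and e: "x(n:=1) = x'(n:=1)"
    show "x = x'"
    proof
      fix j show "x j = x' j"
      proof (cases "j = n")
        case True then show ?thesis using x by (auto simp: PiE_dflt_def)
      next
        case False then show ?thesis using fun_cong[OF e, of j] by simp
      qed
    qed
  qed
  have "(\<Sum>x\<in>V (Suc n). f x) = (\<Sum>x\<in>V n. f x) + (\<Sum>x\<in>(\<lambda>x. x(n:=1)) ` V n. f x)"
    unfolding V_Suc_eq using disj finite_V by (intro sum.union_disjoint) auto
  also have "(\<Sum>x\<in>(\<lambda>x. x(n:=1)) ` V n. f x) = (\<Sum>x\<in>V n. f (x(n:=1)))"
    using inj by (subst sum.reindex) auto
  finally show ?thesis by (simp add: sum.distrib)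
qed

lemma cos_pair: "cos (c - d) + cos (c + d) = 2 * cos d * cos (c::real)"
  by (simp add: cos_add cos_diff)

lemma V0: "V 0 = {\<lambda>_. 0}" by (auto simp: PiE_dflt_def)

lemma cos_prod:
  "(\<Sum>x\<in>V n. cos (A + \<theta> * (\<Sum>i<n. y i * x i))) =
     2^n * cos (A + \<theta> * (\<Sum>i<n. y i) / 2) * (\<Prod>i<n. cos (\<theta> * y i / 2))"
proof (induction n arbitrary: A)
  case 0 then show ?case by (simp only: V0) simp
next
  case (Suc n)
  have "(\<Sum>x\<in>V (Suc n). cos (A + \<theta> * (\<Sum>i<Suc n. y i * x i))) =
        (\<Sum>x\<in>V n. 2 * cos (\<theta> * y n / 2) * cos ((A + \<theta> * y n / 2) + \<theta> * (\<Sum>i<n. y i * x i)))"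
    unfolding sum_V_Suc
  proof (intro sum.cong refl)
    fix x assume x: "x \<in> V n"
    have xn: "x n = 0" using x by (auto simp: PiE_dflt_def)
    have s1: "(\<Sum>i<Suc n. y i * x i) = (\<Sum>i<n. y i * x i)" using xn by simp
    have s2: "(\<Sum>i<Suc n. y i * (x(n:=1)) i) = (\<Sum>i<n. y i * x i) + y n"
      by (simp add: sum.lessThan_Suc)
    define c where "c = A + \<theta> * y n / 2 + \<theta> * (\<Sum>i<n. y i * x i)"
    have "cos (c - \<theta> * y n / 2) + cos (c + \<theta> * y n / 2) = 2 * cos (\<theta> * y n / 2) * cos c" by (rule cos_pair)
    moreover have "c - \<theta> * y n / 2 = A + \<theta> * (\<Sum>i<n. y i * x i)" unfolding c_def by simp
    moreover have "c + \<theta> * y n / 2 = A + \<theta> * ((\<Sum>i<n. y i * x i) + y n)" unfolding c_def by (simp add: algebra_simps)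
    ultimately show "cos (A + \<theta> * (\<Sum>i<Suc n. y i * x i)) + cos (A + \<theta> * (\<Sum>i<Suc n. y i * (x(n:=1)) i)) =
         2 * cos (\<theta> * y n / 2) * cos ((A + \<theta> * y n / 2) + \<theta> * (\<Sum>i<n. y i * x i))"
      unfolding s1 s2 c_def by simp
  qed
  also have "\<dots> = 2 * cos (\<theta> * y n / 2) * (\<Sum>x\<in>V n. cos ((A + \<theta> * y n / 2) + \<theta> * (\<Sum>i<n. y i * x i)))"
    by (simp add: sum_distrib_left)
  also have "\<dots> = 2 * cos (\<theta> * y n / 2) * (2^n * cos ((A + \<theta> * y n / 2) + \<theta> * (\<Sum>i<n. y i) / 2) * (\<Prod>i<n. cos (\<theta> * y i / 2)))"
    by (simp only: Suc.IH)
  also have "\<dots> = 2^Suc n * cos (A + \<theta> * (\<Sum>i<Suc n. y i) / 2) * (\<Prod>i<Suc n. cos (\<theta> * y i / 2))"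
    by (simp add: algebra_simps add_divide_distrib)
  finally show ?case .
qed

definition KI :: "real \<Rightarrow> real \<Rightarrow> real" where
  "KI w z = (if z = 0 then w^2/2 else (1 - cos (w*z)) / z^2)"

lemma K_has_int: assumes "w > 0" shows "((\<lambda>\<theta>. (w-\<theta>)*cos(\<theta>*z)) has_integral KI w z) {0..w}"
proof (cases "z = 0")
  case True
  have "((\<lambda>\<theta>. (w-\<theta>)) has_integral ((\<lambda>\<theta>. w*\<theta> - \<theta>^2/2) w - (\<lambda>\<theta>. w*\<theta> - \<theta>^2/2) 0)) {0..w}"
    using assms by (intro ftc_real) (auto intro!: derivative_eq_intros)
  then show ?thesis using True by (simp add: KI_def power2_eq_square)
next
  case False
  let ?F = "\<lambda>\<theta>. (w-\<theta>)* sin(\<theta>*z) / z - cos(\<theta>*z) / (z * z)"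
  have "((\<lambda>\<theta>. (w-\<theta>)*cos(\<theta>*z)) has_integral (?F w - ?F 0)) {0..w}"
    using assms False by (intro ftc_real) (auto intro!: derivative_eq_intros simp: field_simps power2_eq_square)
  then show ?thesis using False by (simp add: KI_def diff_divide_distrib power2_eq_square)
qed

lemma KI_nonneg: "w > 0 \<Longrightarrow> 0 \<le> KI w z"
  by (auto simp: KI_def intro!: divide_nonneg_nonneg)

lemma KI_lower: assumes "w > 0" "\<bar>z\<bar> \<le> 1/w" shows "w^2/4 \<le> KI w z"
proof -
  have "((\<lambda>\<theta>. (w-\<theta>)/2) has_integral ((\<lambda>\<theta>. (w*\<theta> - \<theta>^2/2)/2) w - (\<lambda>\<theta>. (w*\<theta> - \<theta>^2/2)/2) 0)) {0..w}"
    using assms by (intro ftc_real) (auto intro!: derivative_eq_intros)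
  then have h: "((\<lambda>\<theta>. (w-\<theta>)/2) has_integral (w^2/4)) {0..w}" by (simp add: power2_eq_square)
  show ?thesis
  proof (rule has_integral_le[OF h K_has_int[OF assms(1)]])
    fix \<theta> assume th: "\<theta> \<in> {0..w}"
    have "\<bar>\<theta>*z\<bar> \<le> w * (1/w)" unfolding abs_mult using th assms by (intro mult_mono) auto
    then have "\<bar>\<theta>*z\<bar> \<le> 1" using assms by simp
    then have "(\<theta>*z)^2 \<le> 1" by (metis abs_le_square_iff abs_one power_one)
    then have "1/2 \<le> cos (\<theta>*z)" using cos_lower2[of "\<theta>*z"] by linarith
    then have "(w-\<theta>)*(1/2) \<le> (w-\<theta>)*cos(\<theta>*z)" by (rule mult_left_mono) (use th in auto)
    then show "(w-\<theta>)/2 \<le> (w-\<theta>)*cos(\<theta>*z)" by simp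
  qed
qed

lemma card_filter_sum: "finite A \<Longrightarrow> real (card {x\<in>A. P x}) * c = (\<Sum>x\<in>A. if P x then c else 0)"
proof -
  assume "finite A"
  then have "(\<Sum>x\<in>A. if P x then c else 0) = (\<Sum>x\<in>A \<inter> {x. P x}. c)"
    by (subst sum.If_cases) auto
  also have "A \<inter> {x. P x} = {x\<in>A. P x}" by auto
  finally show ?thesis by simp
qed

lemma anticonc:
  fixes w :: real and y :: "nat \<Rightarrow> real"
  assumes w: "w > 0" and y2: "(\<Sum>i<n. (y i)^2) = 1" and yb: "\<And>i. i < n \<Longrightarrow> \<bar>y i\<bar> * w \<le> 2"
  shows "real (card {x\<in>V n. \<bar>\<Sum>i<n. y i * x i\<bar> \<le> 1/w}) \<le> 2^n * 8 * exp 3 / w"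
proof -
  define S where "S x = (\<Sum>i<n. y i * x i)" for x :: "nat \<Rightarrow> real"
  have int: "((\<lambda>\<theta>. \<Sum>x\<in>V n. (w-\<theta>)*cos(\<theta> * S x)) has_integral (\<Sum>x\<in>V n. KI w (S x))) {0..w}"
    by (intro has_integral_sum finite_V K_has_int w)
  define C where "C = w * 2^n * exp 3"
  have gint: "((\<lambda>\<theta>. C * exp(-\<theta>/2)) has_integral ((\<lambda>\<theta>. -2*C*exp(-\<theta>/2)) w - (\<lambda>\<theta>. -2*C*exp(-\<theta>/2)) 0)) {0..w}"
    using w by (intro ftc_real) (auto intro!: derivative_eq_intros)
  have pt: "(\<Sum>x\<in>V n. (w-\<theta>)*cos(\<theta> * S x)) \<le> C * exp(-\<theta>/2)" if th: "\<theta> \<in> {0..w}" for \<theta>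
  proof -
    have "(\<Sum>x\<in>V n. (w-\<theta>)*cos(\<theta> * S x)) = (w-\<theta>) * (\<Sum>x\<in>V n. cos(0 + \<theta> * (\<Sum>i<n. y i * x i)))"
      by (simp add: sum_distrib_left S_def)
    also have "\<dots> = (w-\<theta>) * (2^n * cos (0 + \<theta> * (\<Sum>i<n. y i) / 2) * (\<Prod>i<n. cos (\<theta> * y i / 2)))"
      by (simp only: cos_prod)
    also have "\<dots> \<le> w * (2^n * exp (-(\<theta>^2/12)))"
    proof -
      have "\<bar>\<Prod>i<n. cos (\<theta> * y i / 2)\<bar> = (\<Prod>i<n. \<bar>cos (\<theta> * y i / 2)\<bar>)" by (rule abs_prod)
      also have "\<dots> \<le> (\<Prod>i<n. exp (-((\<theta> * y i / 2)^2/3)))"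
      proof (rule prod_mono)
        fix i assume i: "i \<in> {..<n}"
        have "\<bar>\<theta> * y i / 2\<bar> = \<theta> * \<bar>y i\<bar> / 2" using th by (simp add: abs_mult)
        also have "\<dots> \<le> w * \<bar>y i\<bar> / 2" using th by (intro divide_right_mono mult_right_mono) auto
        also have "\<dots> \<le> 1" using yb[of i] i by (simp add: mult.commute)
        finally show "0 \<le> \<bar>cos (\<theta> * y i / 2)\<bar> \<and> \<bar>cos (\<theta> * y i / 2)\<bar> \<le> exp (-((\<theta> * y i / 2)^2/3))"
          using abs_cos_le_exp by auto
      qed
      also have "\<dots> = exp (\<Sum>i<n. -((\<theta> * y i / 2)^2/3))" by (simp add: exp_sum)
      also have "(\<Sum>i<n. -((\<theta> * y i / 2)^2/3)) = -(\<theta>^2/12) * (\<Sum>i<n. (y i)^2)"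
        by (simp add: sum_distrib_left power_mult_distrib power_divide)
      also have "\<dots> = -(\<theta>^2/12)" using y2 by simp
      finally have p: "\<bar>\<Prod>i<n. cos (\<theta> * y i / 2)\<bar> \<le> exp (-(\<theta>^2/12))" .
      have "2^n * cos (0 + \<theta> * (\<Sum>i<n. y i) / 2) * (\<Prod>i<n. cos (\<theta> * y i / 2))
            \<le> \<bar>2^n * cos (0 + \<theta> * (\<Sum>i<n. y i) / 2) * (\<Prod>i<n. cos (\<theta> * y i / 2))\<bar>" by simp
      also have "\<dots> = 2^n * \<bar>cos (0 + \<theta> * (\<Sum>i<n. y i) / 2)\<bar> * \<bar>\<Prod>i<n. cos (\<theta> * y i / 2)\<bar>"
        by (simp add: abs_mult)
      also have "\<dots> \<le> 2^n * 1 * exp (-(\<theta>^2/12))"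
        by (intro mult_mono p) auto
      finally have "2^n * cos (0 + \<theta> * (\<Sum>i<n. y i) / 2) * (\<Prod>i<n. cos (\<theta> * y i / 2)) \<le> 2^n * 1 * exp (-(\<theta>^2/12))" .
      then have XY: "2^n * cos (0 + \<theta> * (\<Sum>i<n. y i) / 2) * (\<Prod>i<n. cos (\<theta> * y i / 2)) \<le> 2^n * exp (-(\<theta>^2/12))"
        by simp
      have "(w-\<theta>) * (2^n * cos (0 + \<theta> * (\<Sum>i<n. y i) / 2) * (\<Prod>i<n. cos (\<theta> * y i / 2))) \<le> (w-\<theta>) * (2^n * exp (-(\<theta>^2/12)))"
        using XY th by (intro mult_left_mono) auto
      also have "\<dots> \<le> w * (2^n * exp (-(\<theta>^2/12)))" using th by (intro mult_right_mono) auto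
      finally show ?thesis .
    qed
    also have "\<dots> \<le> w * (2^n * (exp 3 * exp (-\<theta>/2)))"
    proof -
      have "-(\<theta>^2/12) \<le> 3 + (-\<theta>/2)"
      proof -
        have "0 \<le> (\<theta> - 3)^2 + 27" by simp
        then show ?thesis by (simp add: power2_eq_square algebra_simps)
      qed
      then have "exp (-(\<theta>^2/12)) \<le> exp 3 * exp (-\<theta>/2)" by (simp add: exp_add[symmetric])
      then show ?thesis using w by (intro mult_left_mono) auto
    qed
    also have "\<dots> = C * exp(-\<theta>/2)" by (simp add: C_def)
    finally show ?thesis .
  qed
  have "(\<Sum>x\<in>V n. KI w (S x)) \<le> (\<lambda>\<theta>. -2*C*exp(-\<theta>/2)) w - (\<lambda>\<theta>. -2*C*exp(-\<theta>/2)) 0"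
    by (rule has_integral_le[OF int gint pt])
  also have "\<dots> \<le> 2 * C" using w by (simp add: C_def)
  finally have KIsum: "(\<Sum>x\<in>V n. KI w (S x)) \<le> 2 * C" .
  have "real (card {x\<in>V n. \<bar>S x\<bar> \<le> 1/w}) * (w^2/4) = (\<Sum>x\<in>V n. if \<bar>S x\<bar> \<le> 1/w then w^2/4 else 0)"
    by (rule card_filter_sum[OF finite_V])
  also have "\<dots> \<le> (\<Sum>x\<in>V n. KI w (S x))"
  proof (intro sum_mono)
    fix x assume "x \<in> V n"
    show "(if \<bar>S x\<bar> \<le> 1/w then w^2/4 else 0) \<le> KI w (S x)"
      using KI_lower[OF w, of "S x"] KI_nonneg[OF w, of "S x"] by (smt (verit))
  qed
  finally have "real (card {x\<in>V n. \<bar>S x\<bar> \<le> 1/w}) * (w^2/4) \<le> 2 * C" using KIsum by linarith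
  then have "real (card {x\<in>V n. \<bar>S x\<bar> \<le> 1/w}) * w \<le> 8 * w * 2^n * exp 3 / w"
    using w by (simp add: C_def power2_eq_square field_simps)
  then have "real (card {x\<in>V n. \<bar>S x\<bar> \<le> 1/w}) \<le> 8 * 2^n * exp 3 / w"
    using w by (simp add: field_simps)
  then show ?thesis by (simp add: S_def mult.commute mult.left_commute)
qed
lemma binsum_bound:
  fixes x :: real
  assumes x: "0 < x" "x \<le> 1"
  shows "real (\<Sum>k\<le>r. n choose k) \<le> (1+x)^n / x^r"
proof -
  have "real (\<Sum>k\<le>r. n choose k) = (\<Sum>k\<le>r. real (n choose k))" by simp
  also have "\<dots> \<le> (\<Sum>k\<le>r. real (n choose k) * x^k / x^r)"
  proof (intro sum_mono)
    fix k assume "k \<in> {..r}"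
    then have "x^r \<le> x^k" using x by (intro power_decreasing) auto
    then have "1 \<le> x^k / x^r" using x by simp
    then show "real (n choose k) \<le> real (n choose k) * x^k / x^r"
      using mult_left_mono[of 1 "x^k / x^r" "real (n choose k)"] by simp
  qed
  also have "\<dots> = (\<Sum>k\<le>r. real (n choose k) * x^k) / x^r" by (simp add: sum_divide_distrib)
  also have "(\<Sum>k\<le>r. real (n choose k) * x^k) \<le> (\<Sum>k\<le>r+n. real (n choose k) * x^k)"
    using x by (intro sum_mono2) auto
  also have "\<dots> = (\<Sum>k\<le>n. real (n choose k) * x^k)"
    by (rule sum.mono_neutral_right) auto
  also have "\<dots> = (x + 1)^n" by (subst binomial_ring) simp
  finally show ?thesis using x by (simp add: divide_right_mono add.commute)
qed

lemma card_subsets_le: "card {K. K \<subseteq> {..<n} \<and> card K \<le> r} \<le> (\<Sum>k\<le>r. n choose k)"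
proof -
  have eq: "{K. K \<subseteq> {..<n} \<and> card K \<le> r} = (\<Union>k\<in>{..r}. {K. K \<subseteq> {..<n} \<and> card K = k})" by auto
  have "card {K. K \<subseteq> {..<n} \<and> card K \<le> r} \<le> (\<Sum>k\<le>r. card {K. K \<subseteq> {..<n} \<and> card K = k})"
    unfolding eq by (rule card_UN_le) simp
  also have "\<dots> = (\<Sum>k\<le>r. n choose k)" by (intro sum.cong refl) (subst n_subsets; simp)
  finally show ?thesis .
qed

lemma hamming_count:
  assumes R0: "R0 \<in> V n"
  shows "card {R\<in>V n. card {j. j<n \<and> R j \<noteq> R0 j} \<le> r} \<le> (\<Sum>k\<le>r. n choose k)"
proof -
  let ?D = "\<lambda>R. {j. j<n \<and> R j \<noteq> R0 j}"
  have inj: "inj_on ?D {R\<in>V n. card (?D R) \<le> r}"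
  proof (rule inj_onI)
    fix R R' assume R: "R \<in> {R\<in>V n. card (?D R) \<le> r}" and R': "R' \<in> {R\<in>V n. card (?D R) \<le> r}"
      and e: "?D R = ?D R'"
    show "R = R'"
    proof
      fix j show "R j = R' j"
      proof (cases "j < n")
        case True
        have v: "R j \<in> {0,1}" "R' j \<in> {0,1}" "R0 j \<in> {0,1}" using R R' R0 True by (auto simp: PiE_dflt_def)
        have "(R j \<noteq> R0 j) = (R' j \<noteq> R0 j)" using e True by blast
        then show ?thesis using v by auto
      next
        case False then show ?thesis using R R' by (auto simp: PiE_dflt_def)
      qed
    qed
  qed
  have "card {R\<in>V n. card (?D R) \<le> r} = card (?D ` {R\<in>V n. card (?D R) \<le> r})"
    by (rule card_image[OF inj, symmetric])
  also have "\<dots> \<le> card {K. K \<subseteq> {..<n} \<and> card K \<le> r}"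
    by (intro card_mono) auto
  also have "\<dots> \<le> (\<Sum>k\<le>r. n choose k)" by (rule card_subsets_le)
  finally show ?thesis .
qed

lemma sq_diff_le: "((a::real) - b)^2 \<le> 2*(a+w)^2 + 2*(b+w)^2"
proof -
  have "0 \<le> (a + b + 2*w)^2" by simp
  then show ?thesis by (simp add: power2_eq_square algebra_simps)
qed

lemma ball_count:
  fixes y0 c \<delta> \<alpha> :: real and w :: "nat \<Rightarrow> real"
  assumes d: "\<delta> > 0" "\<delta> \<le> \<bar>y0\<bar>" and al: "4*c^2 \<le> \<alpha> * \<delta>^2"
  shows "card {R\<in>bal_rows n. (\<Sum>j<n. (y0 * R j + w j)^2) \<le> c^2 * n} \<le> (\<Sum>k\<le>nat \<lfloor>\<alpha> * n\<rfloor>. n choose k)"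
proof (cases "{R\<in>bal_rows n. (\<Sum>j<n. (y0 * R j + w j)^2) \<le> c^2 * n} = {}")
  case True then show ?thesis unfolding True by simp
next
  case False
  then obtain R0 where R0: "R0 \<in> bal_rows n" "(\<Sum>j<n. (y0 * R0 j + w j)^2) \<le> c^2 * n" by auto
  have R0V: "R0 \<in> V n" using R0 bal_sub by blast
  have sub: "{R\<in>bal_rows n. (\<Sum>j<n. (y0 * R j + w j)^2) \<le> c^2 * n} \<subseteq>
        {R\<in>V n. card {j. j<n \<and> R j \<noteq> R0 j} \<le> nat \<lfloor>\<alpha> * n\<rfloor>}"
  proof
    fix R assume "R \<in> {R\<in>bal_rows n. (\<Sum>j<n. (y0 * R j + w j)^2) \<le> c^2 * n}"
    then have R: "R \<in> bal_rows n" "(\<Sum>j<n. (y0 * R j + w j)^2) \<le> c^2 * n" by auto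
    have RV: "R \<in> V n" using R bal_sub by blast
    have "(\<Sum>j<n. (y0 * R j - y0 * R0 j)^2) \<le> (\<Sum>j<n. 2*(y0 * R j + w j)^2 + 2*(y0 * R0 j + w j)^2)"
      by (intro sum_mono sq_diff_le)
    also have "\<dots> = 2*(\<Sum>j<n. (y0 * R j + w j)^2) + 2*(\<Sum>j<n. (y0 * R0 j + w j)^2)"
      by (simp add: sum.distrib sum_distrib_left)
    also have "\<dots> \<le> 4 * c^2 * n" using R(2) R0(2) by simp
    finally have 1: "(\<Sum>j<n. (y0 * R j - y0 * R0 j)^2) \<le> 4 * c^2 * n" .
    have "(\<Sum>j<n. (y0 * R j - y0 * R0 j)^2) = y0^2 * (\<Sum>j<n. if j \<in> {j. j<n \<and> R j \<noteq> R0 j} then 1 else 0)"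
    proof -
      have "(\<Sum>j<n. (y0 * R j - y0 * R0 j)^2) = (\<Sum>j<n. y0^2 * (if j \<in> {j. j<n \<and> R j \<noteq> R0 j} then 1 else 0))"
      proof (intro sum.cong refl)
        fix j assume j: "j \<in> {..<n}"
        have v: "R j \<in> {0,1}" "R0 j \<in> {0,1}" using RV R0V j by (auto simp: PiE_dflt_def)
        show "(y0 * R j - y0 * R0 j)^2 = y0^2 * (if j \<in> {j. j<n \<and> R j \<noteq> R0 j} then 1 else 0)"
          using v j by (auto simp: power2_eq_square algebra_simps)
      qed
      then show ?thesis by (simp add: sum_distrib_left)
    qed
    also have "(\<Sum>j<n. if j \<in> {j. j<n \<and> R j \<noteq> R0 j} then 1 else (0::real)) = real (card {j. j<n \<and> R j \<noteq> R0 j})"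
    proof -
      have "(\<Sum>j<n. if j \<in> {j. j<n \<and> R j \<noteq> R0 j} then 1 else (0::real)) = real (card ({..<n} \<inter> {j. j<n \<and> R j \<noteq> R0 j}))"
        by (subst sum.If_cases) auto
      also have "{..<n} \<inter> {j. j<n \<and> R j \<noteq> R0 j} = {j. j<n \<and> R j \<noteq> R0 j}" by auto
      finally show ?thesis .
    qed
    finally have 2: "y0^2 * real (card {j. j<n \<and> R j \<noteq> R0 j}) \<le> 4 * c^2 * n" using 1 by simp
    have "\<delta>^2 \<le> y0^2" using d by (metis abs_ge_zero abs_le_square_iff order_trans less_imp_le abs_of_pos)
    then have "\<delta>^2 * real (card {j. j<n \<and> R j \<noteq> R0 j}) \<le> y0^2 * real (card {j. j<n \<and> R j \<noteq> R0 j})"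
      by (intro mult_right_mono) auto
    also have "\<dots> \<le> \<alpha> * \<delta>^2 * n" using 2 al by (meson order_trans mult_right_mono of_nat_0_le_iff)
    finally have "\<delta>^2 * real (card {j. j<n \<and> R j \<noteq> R0 j}) \<le> \<delta>^2 * (\<alpha> * n)" by (simp add: ac_simps)
    then have "real (card {j. j<n \<and> R j \<noteq> R0 j}) \<le> \<alpha> * n" using d by simp
    then have "card {j. j<n \<and> R j \<noteq> R0 j} \<le> nat \<lfloor>\<alpha> * n\<rfloor>" by linarith
    then show "R \<in> {R\<in>V n. card {j. j<n \<and> R j \<noteq> R0 j} \<le> nat \<lfloor>\<alpha> * n\<rfloor>}" using RV by simp
  qed
  have "card {R\<in>bal_rows n. (\<Sum>j<n. (y0 * R j + w j)^2) \<le> c^2 * n} \<le> card {R\<in>V n. card {j. j<n \<and> R j \<noteq> R0 j} \<le> nat \<lfloor>\<alpha> * n\<rfloor>}"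
    by (intro card_mono sub) (auto intro: finite_subset[OF _ finite_V])
  also have "\<dots> \<le> (\<Sum>k\<le>nat \<lfloor>\<alpha> * n\<rfloor>. n choose k)" by (rule hamming_count[OF R0V])
  finally show ?thesis .
qed
lemma vecmat_split:
  assumes "i0 < n"
  shows "vecmat n y Q j = y i0 * Q i0 j + vecmat n y (Q(i0 := (\<lambda>_. 0))) j"
proof -
  have 1: "(\<Sum>i<n. y i * Q i j) = y i0 * Q i0 j + (\<Sum>i\<in>{..<n}-{i0}. y i * Q i j)"
    using assms by (subst sum.remove[of _ i0]) auto
  have 2: "(\<Sum>i<n. y i * (Q(i0 := (\<lambda>_. 0))) i j) = y i0 * 0 + (\<Sum>i\<in>{..<n}-{i0}. y i * (Q(i0 := (\<lambda>_. 0))) i j)"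
    using assms by (subst sum.remove[of _ i0]) auto
  have 3: "(\<Sum>i\<in>{..<n}-{i0}. y i * (Q(i0 := (\<lambda>_. 0))) i j) = (\<Sum>i\<in>{..<n}-{i0}. y i * Q i j)"
    by (intro sum.cong) auto
  show ?thesis unfolding vecmat_def using 1 2 3 by simp
qed

lemma prod_if_one: "i0 < n \<Longrightarrow> (\<Prod>i<n. if i = i0 then (1::nat) else N) = N^(n-1)"
proof -
  assume i0: "i0 < n"
  have "(\<Prod>i<n. if i = i0 then (1::nat) else N) = (if i0 = i0 then 1 else N) * (\<Prod>i\<in>{..<n}-{i0}. if i = i0 then 1 else N)"
    using i0 by (subst prod.remove[of _ i0]) auto
  also have "(\<Prod>i\<in>{..<n}-{i0}. if i = i0 then (1::nat) else N) = (\<Prod>i\<in>{..<n}-{i0}. N)"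
    by (intro prod.cong) auto
  also have "\<dots> = N^(n-1)" using i0 by simp
  finally show ?thesis by simp
qed

lemma caseA_count:
  fixes y :: "nat \<Rightarrow> real" and c \<delta> \<alpha> :: real
  assumes i0: "i0 < n" and d: "\<delta> > 0" "\<delta> \<le> \<bar>y i0\<bar>" and al: "4*c^2 \<le> \<alpha>*\<delta>^2"
  shows "card (MM n \<inter> {Q. (\<Sum>j<n. (vecmat n y Q j)^2) \<le> c^2 * n})
          \<le> card (bal_rows n)^(n-1) * (\<Sum>k\<le>nat \<lfloor>\<alpha> * n\<rfloor>. n choose k)"
proof -
  define E where "E = MM n \<inter> {Q. (\<Sum>j<n. (vecmat n y Q j)^2) \<le> c^2 * n}"
  define f where "f = (\<lambda>Q::nat \<Rightarrow> nat \<Rightarrow> real. Q(i0 := (\<lambda>_. 0)))"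
  define C where "C = PiE_dflt {..<n} (\<lambda>_. 0::real) (\<lambda>i. if i = i0 then {\<lambda>_. 0} else bal_rows n)"
  define H where "H = (\<Sum>k\<le>nat \<lfloor>\<alpha> * n\<rfloor>. n choose k)"
  have fin: "finite E" unfolding E_def using finite_MM by auto
  have img: "f ` E \<subseteq> C" unfolding E_def f_def C_def by (auto simp: PiE_dflt_def)
  have finC: "finite C" unfolding C_def by (rule finite_PiE_dflt) (auto simp: finite_bal)
  have cardC: "card C = card (bal_rows n)^(n-1)"
  proof -
    have "card C = (\<Prod>i<n. card (if i = i0 then {\<lambda>_. 0::real} else bal_rows n))"
      unfolding C_def by (subst card_PiE_dflt) (auto simp: finite_bal)
    also have "\<dots> = (\<Prod>i<n. if i = i0 then 1 else card (bal_rows n))" by (intro prod.cong) auto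
    also have "\<dots> = card (bal_rows n)^(n-1)" by (rule prod_if_one[OF i0])
    finally show ?thesis .
  qed
  have fib: "card {Q\<in>E. f Q = Q'} \<le> H" if Q': "Q' \<in> C" for Q'
  proof -
    define S where "S = {R\<in>bal_rows n. (\<Sum>j<n. (y i0 * R j + vecmat n y Q' j)^2) \<le> c^2 * n}"
    have inj: "inj_on (\<lambda>Q. Q i0) {Q\<in>E. f Q = Q'}"
    proof (rule inj_onI)
      fix Q1 Q2 assume "Q1 \<in> {Q\<in>E. f Q = Q'}" "Q2 \<in> {Q\<in>E. f Q = Q'}" and e: "Q1 i0 = Q2 i0"
      then have e2: "Q1(i0 := (\<lambda>_. 0)) = Q2(i0 := (\<lambda>_. 0))" unfolding f_def by simp
      show "Q1 = Q2"
      proof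
        fix i show "Q1 i = Q2 i" using e fun_cong[OF e2, of i] by (cases "i = i0") auto
      qed
    qed
    have sub: "(\<lambda>Q. Q i0) ` {Q\<in>E. f Q = Q'} \<subseteq> S"
    proof
      fix R assume "R \<in> (\<lambda>Q. Q i0) ` {Q\<in>E. f Q = Q'}"
      then obtain Q where Q: "Q \<in> E" "f Q = Q'" and R: "R = Q i0" by auto
      have "R \<in> bal_rows n" using Q(1) i0 R unfolding E_def by (auto simp: PiE_dflt_def)
      moreover have "(\<Sum>j<n. (y i0 * R j + vecmat n y Q' j)^2) = (\<Sum>j<n. (vecmat n y Q j)^2)"
      proof (intro sum.cong refl)
        fix j show "(y i0 * R j + vecmat n y Q' j)^2 = (vecmat n y Q j)^2"
          using vecmat_split[OF i0, of y Q j] Q(2) R unfolding f_def by simp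
      qed
      ultimately show "R \<in> S" using Q(1) unfolding S_def E_def by simp
    qed
    have "card {Q\<in>E. f Q = Q'} = card ((\<lambda>Q. Q i0) ` {Q\<in>E. f Q = Q'})"
      by (rule card_image[OF inj, symmetric])
    also have "\<dots> \<le> card S" by (intro card_mono sub) (auto simp: S_def finite_bal)
    also have "\<dots> \<le> H" unfolding S_def H_def by (rule ball_count[OF d al])
    finally show ?thesis .
  qed
  have "card E \<le> card C * H" by (rule card_fiber_le[OF fin img finC fib])
  then show ?thesis unfolding E_def H_def cardC .
qed
lemma PiE_dflt_memI: "(\<And>x. x \<in> A \<Longrightarrow> f x \<in> B x) \<Longrightarrow> (\<And>x. x \<notin> A \<Longrightarrow> f x = d) \<Longrightarrow> f \<in> PiE_dflt A d B"
  by (auto simp: PiE_dflt_def)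

lemma fiberB:
  assumes h: "h \<le> n"
  shows "card {R\<in>bal_rows n. \<forall>j<h. R j = u j} \<le> (n-h) choose ((n-h) div 2)"
proof -
  define F where "F = {R\<in>bal_rows n. \<forall>j<h. R j = u j}"
  define k0 where "k0 = n div 2 - card {j. j<h \<and> u j = 1}"
  let ?g = "\<lambda>R. {j\<in>{h..<n}. R j = 1}"
  have inj: "inj_on ?g F"
  proof (rule inj_onI)
    fix R R' assume R: "R \<in> F" and R': "R' \<in> F" and e: "?g R = ?g R'"
    have RV: "R \<in> V n" "R' \<in> V n" using R R' bal_sub unfolding F_def by auto
    show "R = R'"
    proof
      fix j show "R j = R' j"
      proof (cases "j < h")
        case True then show ?thesis using R R' unfolding F_def by auto
      next
        case False
        show ?thesis
        proof (cases "j < n")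
          case True
          have v: "R j \<in> {0,1}" "R' j \<in> {0,1}" using RV True by (auto simp: PiE_dflt_def)
          have "(j \<in> ?g R) = (j \<in> ?g R')" by (simp only: e)
          then have "(R j = 1) = (R' j = 1)" using True False by simp
          then show ?thesis using v by auto
        next
          case False then show ?thesis using RV by (auto simp: PiE_dflt_def)
        qed
      qed
    qed
  qed
  have img: "?g ` F \<subseteq> {K. K \<subseteq> {h..<n} \<and> card K = k0}"
  proof
    fix K assume "K \<in> ?g ` F"
    then obtain R where R: "R \<in> F" and K: "K = ?g R" by auto
    have RV: "R \<in> V n" using R bal_sub unfolding F_def by auto
    have c1: "card {j. j<n \<and> R j = 1} = n div 2"
      using R V_sum[OF RV] unfolding F_def by (simp add: bal_rows_def)
    have un: "{j. j<n \<and> R j = 1} = {j. j<h \<and> u j = 1} \<union> ?g R"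
      using R h unfolding F_def by auto
    have "card {j. j<n \<and> R j = 1} = card {j. j<h \<and> u j = 1} + card (?g R)"
      unfolding un by (rule card_Un_disjoint) auto
    then have "card (?g R) = k0" unfolding k0_def c1 by simp
    then show "K \<in> {K. K \<subseteq> {h..<n} \<and> card K = k0}" using K by auto
  qed
  have "card F = card (?g ` F)" by (rule card_image[OF inj, symmetric])
  also have "\<dots> \<le> card {K. K \<subseteq> {h..<n} \<and> card K = k0}" by (intro card_mono img) auto
  also have "\<dots> = (n-h) choose k0" by (subst n_subsets) auto
  also have "\<dots> \<le> (n-h) choose ((n-h) div 2)" by (rule binomial_maximum)
  finally show ?thesis unfolding F_def .
qed

lemma prod_if_split:
  assumes "T \<subseteq> {..<h}"
  shows "(\<Prod>j<h. if j \<in> T then a * b else b) = b^h * (a::real)^(card T)"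
proof -
  have "(\<Prod>j<h. if j \<in> T then a * b else b) = (\<Prod>j<h. b * (if j \<in> T then a else 1))"
    by (intro prod.cong) auto
  also have "\<dots> = b^h * (\<Prod>j<h. if j \<in> T then a else 1)" by (simp add: prod.distrib)
  also have "(\<Prod>j<h. if j \<in> T then a else 1) = a^(card ({..<h} \<inter> T))"
    by (subst prod.If_cases) auto
  also have "{..<h} \<inter> T = T" using assms by auto
  finally show ?thesis .
qed

lemma caseB_count:
  fixes y :: "nat \<Rightarrow> real" and c w :: real
  assumes w: "w > 0" and y2: "(\<Sum>i<n. (y i)^2) = 1" and yb: "\<And>i. i < n \<Longrightarrow> \<bar>y i\<bar> * w \<le> 2"
    and cw: "16 * c^2 * w^2 \<le> 1" and eta: "2^n * 8 * exp 3 / w \<le> 2^n * \<eta>" and eta1: "\<eta> \<le> 1"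
    and h: "h \<le> n"
  shows "real (card (MM n \<inter> {Q. (\<Sum>j<n. (vecmat n y Q j)^2) \<le> c^2 * n}))
          \<le> 2^h * (2^n)^h * \<eta>^(h - n div 10) * real ((n-h) choose ((n-h) div 2))^n"
proof -
  define E where "E = MM n \<inter> {Q. (\<Sum>j<n. (vecmat n y Q j)^2) \<le> c^2 * n}"
  define D where "D = (n-h) choose ((n-h) div 2)"
  define \<rho> where "\<rho> = (\<lambda>(Q::nat \<Rightarrow> nat \<Rightarrow> real) j i. if j < h then Q i j else 0)"
  define CS where "CS = PiE_dflt {..<h} (\<lambda>_. 0::real) (\<lambda>_. V n)"
  define col where "col = (\<lambda>(Cm::nat \<Rightarrow> nat \<Rightarrow> real) j. \<Sum>i<n. y i * Cm j i)"
  define G where "G = {Cm. (\<Sum>j<h. (col Cm j)^2) \<le> c^2 * n}"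
  define Vt where "Vt = {x\<in>V n. \<bar>\<Sum>i<n. y i * x i\<bar> \<le> 1/w}"
  define Box where "Box = (\<lambda>T. PiE_dflt {..<h} (\<lambda>_. 0::real) (\<lambda>j. if j \<in> T then Vt else V n))"
  define Tset where "Tset = {T. T \<subseteq> {..<h} \<and> h \<le> card T + n div 10}"
  have finE: "finite E" unfolding E_def using finite_MM by auto
  have finCS: "finite CS" unfolding CS_def by (rule finite_PiE_dflt) (auto simp: finite_V)
  have img: "\<rho> ` E \<subseteq> CS \<inter> G"
  proof
    fix Cm assume "Cm \<in> \<rho> ` E"
    then obtain Q where Q: "Q \<in> E" and Cm: "Cm = \<rho> Q" by auto
    have QM: "\<And>i. i < n \<Longrightarrow> Q i \<in> V n" "\<And>i. \<not> i < n \<Longrightarrow> Q i = (\<lambda>_. 0)"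
      using Q bal_sub unfolding E_def by (auto simp: PiE_dflt_def)
    have "Cm \<in> CS" unfolding CS_def
    proof (rule PiE_dflt_memI)
      fix j assume j: "j \<in> {..<h}"
      show "Cm j \<in> V n"
      proof (rule PiE_dflt_memI)
        fix i assume "i \<in> {..<n}" then show "Cm j i \<in> {0,1}" using QM(1)[of i] j unfolding Cm \<rho>_def by (auto simp: PiE_dflt_def)
      next
        fix i assume "i \<notin> {..<n}" then show "Cm j i = 0" using QM(2)[of i] j unfolding Cm \<rho>_def by auto
      qed
    next
      fix j assume "j \<notin> {..<h}" then show "Cm j = (\<lambda>_. 0)" unfolding Cm \<rho>_def by auto
    qed
    moreover have "Cm \<in> G"
    proof -
      have "(\<Sum>j<h. (col Cm j)^2) = (\<Sum>j<h. (vecmat n y Q j)^2)"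
        by (intro sum.cong) (auto simp: col_def Cm \<rho>_def vecmat_def)
      also have "\<dots> \<le> (\<Sum>j<n. (vecmat n y Q j)^2)" using h by (intro sum_mono2) auto
      also have "\<dots> \<le> c^2 * n" using Q unfolding E_def by auto
      finally show ?thesis unfolding G_def by simp
    qed
    ultimately show "Cm \<in> CS \<inter> G" by simp
  qed
  have fib: "card {Q\<in>E. \<rho> Q = Cm} \<le> D^n" if "Cm \<in> CS \<inter> G" for Cm
  proof -
    have sub: "{Q\<in>E. \<rho> Q = Cm} \<subseteq> PiE_dflt {..<n} (\<lambda>_. 0) (\<lambda>i. {R\<in>bal_rows n. \<forall>j<h. R j = Cm j i})"
    proof
      fix Q assume Q: "Q \<in> {Q\<in>E. \<rho> Q = Cm}"
      show "Q \<in> PiE_dflt {..<n} (\<lambda>_. 0) (\<lambda>i. {R\<in>bal_rows n. \<forall>j<h. R j = Cm j i})"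
      proof (rule PiE_dflt_memI)
        fix i assume i: "i \<in> {..<n}"
        have "\<forall>j<h. Q i j = Cm j i" using Q unfolding \<rho>_def by auto
        moreover have "Q i \<in> bal_rows n" using Q i unfolding E_def by (auto simp: PiE_dflt_def)
        ultimately show "Q i \<in> {R\<in>bal_rows n. \<forall>j<h. R j = Cm j i}" by simp
      next
        fix i assume "i \<notin> {..<n}" then show "Q i = (\<lambda>_. 0)" using Q unfolding E_def by (auto simp: PiE_dflt_def)
      qed
    qed
    have "card {Q\<in>E. \<rho> Q = Cm} \<le> card (PiE_dflt {..<n} (\<lambda>_. 0::real) (\<lambda>i. {R\<in>bal_rows n. \<forall>j<h. R j = Cm j i}))"
      by (intro card_mono sub) (auto intro!: finite_PiE_dflt simp: finite_bal)
    also have "\<dots> = (\<Prod>i<n. card {R\<in>bal_rows n. \<forall>j<h. R j = Cm j i})"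
      by (subst card_PiE_dflt) (auto simp: finite_bal)
    also have "\<dots> \<le> (\<Prod>i<n. D)" unfolding D_def by (intro prod_mono) (auto intro: fiberB[OF h])
    finally show ?thesis by simp
  qed
  have finCSG: "finite (CS \<inter> G)" using finCS by auto
  have cardE: "card E \<le> card (CS \<inter> G) * D^n" by (rule card_fiber_le[OF finE img finCSG fib])
  have cover: "CS \<inter> G \<subseteq> (\<Union>T\<in>Tset. Box T)"
  proof
    fix Cm assume Cm: "Cm \<in> CS \<inter> G"
    define T where "T = {j. j<h \<and> \<bar>col Cm j\<bar> \<le> 1/w}"
    define B where "B = {j. j<h \<and> \<not> \<bar>col Cm j\<bar> \<le> 1/w}"
    have "real (card B) * (1/w)^2 = (\<Sum>j\<in>B. (1/w)^2)" by simp
    also have "\<dots> \<le> (\<Sum>j\<in>B. (col Cm j)^2)"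
    proof (intro sum_mono)
      fix j assume "j \<in> B"
      then have "1/w \<le> \<bar>col Cm j\<bar>" unfolding B_def by auto
      then have "(1/w)^2 \<le> \<bar>col Cm j\<bar>^2" using w by (intro power_mono) auto
      then show "(1/w)^2 \<le> (col Cm j)^2" by simp
    qed
    also have "\<dots> \<le> (\<Sum>j<h. (col Cm j)^2)" by (intro sum_mono2) (auto simp: B_def)
    also have "\<dots> \<le> c^2 * n" using Cm unfolding G_def by auto
    finally have "real (card B) * (1/w)^2 \<le> c^2 * n" .
    then have "real (card B) * (1/w)^2 * (16 * w^2) \<le> c^2 * n * (16 * w^2)"
      using w by (intro mult_right_mono) auto
    moreover have "real (card B) * (1/w)^2 * (16 * w^2) = 16 * real (card B)" using w by (simp add: field_simps)
    moreover have "c^2 * n * (16 * w^2) \<le> n" using cw mult_right_mono[OF cw, of "real n"] by (simp add: ac_simps)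
    ultimately have "16 * real (card B) \<le> real n" by linarith
    then have "16 * card B \<le> n" by linarith
    then have cB: "card B \<le> n div 10" by linarith
    have "{..<h} = T \<union> B" unfolding T_def B_def by auto
    moreover have "T \<inter> B = {}" unfolding T_def B_def by auto
    ultimately have "h = card T + card B" by (metis card_Un_disjoint card_lessThan finite_Un finite_lessThan)
    then have "T \<in> Tset" using cB unfolding Tset_def T_def by auto
    moreover have "Cm \<in> Box T"
      unfolding Box_def
    proof (rule PiE_dflt_memI)
      fix j assume j: "j \<in> {..<h}"
      have "Cm j \<in> V n" using Cm j unfolding CS_def PiE_dflt_def by auto
      then show "Cm j \<in> (if j \<in> T then Vt else V n)"
        unfolding Vt_def T_def col_def using j by auto
    next
      fix j assume "j \<notin> {..<h}" then show "Cm j = (\<lambda>_. 0)" using Cm unfolding CS_def PiE_dflt_def by auto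
    qed
    ultimately show "Cm \<in> (\<Union>T\<in>Tset. Box T)" by blast
  qed
  have finT: "finite Tset" unfolding Tset_def by (rule finite_subset[of _ "Pow {..<h}"]) auto
  have cardT: "card Tset \<le> 2^h"
  proof -
    have "card Tset \<le> card (Pow {..<h})" unfolding Tset_def by (intro card_mono) auto
    then show ?thesis by (simp add: card_Pow)
  qed
  have boxb: "real (card (Box T)) \<le> (2^n)^h * \<eta>^(h - n div 10)" if T: "T \<in> Tset" for T
  proof -
    have TT: "T \<subseteq> {..<h}" "h \<le> card T + n div 10" using T unfolding Tset_def by auto
    have "real (card (Box T)) = (\<Prod>j<h. real (card (if j \<in> T then Vt else V n)))"
      unfolding Box_def by (subst card_PiE_dflt) (auto simp: Vt_def finite_V)
    also have "\<dots> \<le> (\<Prod>j<h. if j \<in> T then \<eta> * 2^n else 2^n)"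
    proof (intro prod_mono conjI)
      fix j assume "j \<in> {..<h}"
      have "real (card Vt) \<le> 2^n * \<eta>" using anticonc[OF w y2 yb] eta unfolding Vt_def by linarith
      then show "real (card (if j \<in> T then Vt else V n)) \<le> (if j \<in> T then \<eta> * 2^n else 2^n)"
        by (auto simp: card_V mult.commute)
    qed auto
    also have "\<dots> = (2^n)^h * \<eta>^(card T)" by (rule prod_if_split[OF TT(1)])
    also have "\<dots> \<le> (2^n)^h * \<eta>^(h - n div 10)"
    proof -
      have "0 < (2::real)^n * 8 * exp 3 / w" using w by simp
      then have "0 < (2::real)^n * \<eta>" using eta by linarith
      then have "0 \<le> \<eta>" by (simp add: zero_less_mult_iff)
      then have "\<eta>^(card T) \<le> \<eta>^(h - n div 10)" using TT(2) eta1 by (intro power_decreasing) auto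
      then show ?thesis by (intro mult_left_mono) auto
    qed
    finally show ?thesis .
  qed
  have "card (CS \<inter> G) \<le> card (\<Union>T\<in>Tset. Box T)"
    by (intro card_mono cover) (auto intro!: finite_PiE_dflt simp: Box_def finT Vt_def finite_V)
  also have "\<dots> \<le> (\<Sum>T\<in>Tset. card (Box T))" by (rule card_UN_le[OF finT])
  finally have "real (card (CS \<inter> G)) \<le> (\<Sum>T\<in>Tset. real (card (Box T)))" by (metis of_nat_le_iff of_nat_sum)
  also have "\<dots> \<le> (\<Sum>T\<in>Tset. (2^n)^h * \<eta>^(h - n div 10))" by (intro sum_mono boxb)
  also have "\<dots> = real (card Tset) * ((2^n)^h * \<eta>^(h - n div 10))" by simp
  also have "\<dots> \<le> 2^h * ((2^n)^h * \<eta>^(h - n div 10))"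
  proof (rule mult_right_mono)
    show "real (card Tset) \<le> 2^h" using cardT by (metis of_nat_le_iff of_nat_numeral of_nat_power)
    have "0 < (2::real)^n * 8 * exp 3 / w" using w by simp
    then have "0 < (2::real)^n * \<eta>" using eta by linarith
    then have "0 \<le> \<eta>" by (simp add: zero_less_mult_iff)
    then show "0 \<le> (2^n)^h * \<eta>^(h - n div 10)" by simp
  qed
  finally have cCSG: "real (card (CS \<inter> G)) \<le> 2^h * ((2^n)^h * \<eta>^(h - n div 10))" .
  have "real (card E) \<le> real (card (CS \<inter> G)) * real D^n" using cardE by (metis of_nat_le_iff of_nat_mult of_nat_power)
  also have "\<dots> \<le> 2^h * ((2^n)^h * \<eta>^(h - n div 10)) * real D^n" using cCSG by (intro mult_right_mono) auto
  finally show ?thesis unfolding E_def D_def by (simp add: ac_simps)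
qed
lemma caseA_numeric:
  fixes e :: real
  assumes e: "0 < e" "e \<le> 1/4"
  defines "\<alpha> \<equiv> ln ((1+e)/(1+e/2)) / ln (2/e)"
  shows "\<alpha> > 0" "real (\<Sum>k\<le>nat \<lfloor>\<alpha> * n\<rfloor>. n choose k) \<le> (1+e)^n"
proof -
  define x where "x = e/2"
  define \<rho> where "\<rho> = (1+e)/(1+e/2)"
  have x: "0 < x" "x \<le> 1" using e by (auto simp: x_def)
  have rho: "\<rho> > 1" using e by (simp add: \<rho>_def field_simps)
  have l2: "ln (2/e) > 0" using e by simp
  have lr: "ln \<rho> > 0" using rho by simp
  show apos: "\<alpha> > 0" unfolding \<alpha>_def \<rho>_def[symmetric] using l2 lr by simp
  define r where "r = nat \<lfloor>\<alpha> * n\<rfloor>"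
  have z: "0 \<le> \<alpha> * n" using apos by simp
  have "real r = of_int \<lfloor>\<alpha> * n\<rfloor>" unfolding r_def using z by simp
  then have rle: "real r \<le> \<alpha> * n" by simp
  have "real (\<Sum>k\<le>r. n choose k) \<le> (1+x)^n / x^r" by (rule binsum_bound[OF x])
  also have "x^r = x powr (real r)" using x by (simp add: powr_realpow)
  also have "(1+x)^n / x powr (real r) \<le> (1+x)^n / x powr (\<alpha> * n)"
  proof (rule divide_left_mono)
    show "x powr (\<alpha> * n) \<le> x powr (real r)" using rle x by (intro powr_mono') auto
    show "0 \<le> (1+x)^n" using x by simp
    show "0 < x powr (real r) * x powr (\<alpha> * n)" using x by simp
  qed
  also have "x powr (\<alpha> * n) = (x powr \<alpha>)^n"
    using x by (simp add: powr_powr[symmetric] powr_realpow)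
  also have "x powr \<alpha> = 1/\<rho>"
  proof -
    have "ln x = - ln (2/e)" using e by (simp add: x_def ln_div)
    then have "x powr \<alpha> = exp (- ln \<rho>)" using x l2 by (simp add: powr_def \<alpha>_def \<rho>_def)
    also have "\<dots> = 1/\<rho>" using rho by (simp add: exp_minus inverse_eq_divide)
    finally show ?thesis .
  qed
  also have "(1+x)^n / (1/\<rho>)^n = ((1+x)*\<rho>)^n" by (simp add: power_divide power_mult_distrib)
  also have "(1+x)*\<rho> = 1+e" using e by (simp add: x_def \<rho>_def field_simps)
  finally show "real (\<Sum>k\<le>nat \<lfloor>\<alpha> * n\<rfloor>. n choose k) \<le> (1+e)^n" unfolding r_def .
qed

lemma pow4a: "(2::real)^(k*2) = 4^k"
proof -
  have b: "(2::real)^(k*2) = (2^2)^k" by (simp only: mult.commute[of k 2] power_mult)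
  show ?thesis unfolding b by simp
qed

lemma pow4b: "((2::real)^k)^2 = 4^k"
  by (simp only: power_mult[symmetric] pow4a)

lemma N_lower: "2^n \<le> real (n choose (n div 2)) * (2 * (n+1))"
proof -
  have a: "((2::real)^n)^2 = 2^(n*2)" by (simp only: power_mult)
  have b: "(2::real)^(n*2) = (2^2)^n" by (simp only: mult.commute[of n 2] power_mult)
  have "(2^n)^2 = (4::real)^n" unfolding a b by simp
  also have "\<dots> \<le> real (n choose (n div 2))^2 * (4*n+4)" by (rule cb_lower)
  also have "\<dots> \<le> real (n choose (n div 2))^2 * (2*(n+1))^2"
    by (intro mult_left_mono) (auto simp: power2_eq_square algebra_simps)
  also have "\<dots> = (real (n choose (n div 2)) * (2 * (n+1)))^2" by (simp add: power_mult_distrib)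
  finally show ?thesis by (rule power2_le_imp_le) simp
qed

lemma DN_bound:
  assumes n: "n \<ge> 1"
  shows "2^(n div 2) * real ((n - n div 2) choose ((n - n div 2) div 2)) \<le> 4 * real (n choose (n div 2))"
proof -
  define h where "h = n div 2"
  define m where "m = n - h"
  define D where "D = real (m choose (m div 2))"
  define N where "N = real (n choose (n div 2))"
  have m1: "m \<ge> 1" using n by (simp add: m_def h_def)
  have mn: "4*n+4 \<le> 16*m" using n unfolding m_def h_def by linarith
  have Dm: "D^2 * m \<le> 4^m" unfolding D_def by (rule cb_upper[OF m1])
  have Nn: "4^n \<le> N^2 * (4*n+4)" unfolding N_def by (rule cb_lower)
  have "(2^h * D)^2 * m = 4^h * (D^2 * m)" by (simp only: power_mult_distrib pow4b mult.assoc)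
  also have "\<dots> \<le> 4^h * 4^m" using Dm by (intro mult_left_mono) auto
  also have "\<dots> = 4^n" by (simp add: power_add[symmetric] m_def h_def)
  also have "\<dots> \<le> N^2 * (4*n+4)" by (rule Nn)
  also have "\<dots> \<le> N^2 * (16*m)" using mn by (intro mult_left_mono) (auto simp del: of_nat_add simp: of_nat_le_iff[symmetric])
  finally have "(2^h * D)^2 * m \<le> (4*N)^2 * m" by (simp add: power_mult_distrib)
  then have "(2^h * D)^2 \<le> (4*N)^2" using m1 by simp
  then have "2^h * D \<le> 4*N" by (rule power2_le_imp_le) (simp add: N_def)
  then show ?thesis unfolding h_def m_def D_def N_def .
qed
lemma exp3_le: "exp (3::real) \<le> 27"
proof -
  have "exp (3::real) = exp 1 * exp 1 * exp 1" by (simp add: exp_add[symmetric])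
  also have "\<dots> \<le> 3 * 3 * 3" using exp_le by (intro mult_mono) auto
  finally show ?thesis by simp
qed

lemma div_arith: assumes "(n::nat) \<ge> 10" shows "4 * n \<le> 20 * (n div 2 - n div 10)"
proof -
  have 1: "n = 2*(n div 2) + n mod 2" by simp
  have 2: "n mod 2 < 2" by simp
  have 3: "n div 10 * 10 \<le> n" by (rule div_times_less_eq_dividend)
  show ?thesis using 1 2 3 assms by linarith
qed

lemma l2_le: assumes "c \<ge> 0" "l2norm n v \<le> c * sqrt (real n)" shows "(\<Sum>j<n. (v j)^2) \<le> c^2 * n"
proof -
  have s0: "0 \<le> (\<Sum>j<n. (v j)^2)" by (intro sum_nonneg) auto
  have "sqrt (\<Sum>j<n. (v j)^2) \<le> c * sqrt (real n)" using assms(2) by (simp add: l2norm_def)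
  then have "(sqrt (\<Sum>j<n. (v j)^2))^2 \<le> (c * sqrt (real n))^2" using s0 by (intro power_mono) auto
  then show ?thesis using s0 by (simp add: power_mult_distrib)
qed

theorem lemma6p2:
  fixes \<epsilon> :: real
  assumes "\<epsilon> > 0"
  shows "\<exists>c::real. c > 0 \<and> (\<exists>n0::nat. n0 > 0 \<and>
           (\<forall>n\<ge>n0. \<forall>y::nat \<Rightarrow> real. (\<Sum>i<n. (y i)\<^sup>2) = 1 \<longrightarrow>
              measure_pmf.prob (random_Q n)
                {Q. l2norm n (vecmat n y Q) \<le> c * sqrt (real n)} \<le> (1/2 + \<epsilon>) ^ n))"
proof -
  define e where "e = min \<epsilon> (1/4)"
  have e: "0 < e" "e \<le> 1/4" "e \<le> \<epsilon>" using assms by (auto simp: e_def)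
  define \<alpha> where "\<alpha> = ln ((1+e)/(1+e/2)) / ln (2/e)"
  have apos: "\<alpha> > 0" using caseA_numeric(1)[OF e(1) e(2)] unfolding \<alpha>_def .
  have Hb: "\<And>n. real (\<Sum>k\<le>nat \<lfloor>\<alpha> * n\<rfloor>. n choose k) \<le> (1+e)^n"
    using caseA_numeric(2)[OF e(1) e(2)] unfolding \<alpha>_def .
  define w :: real where "w = 2^28"
  have w: "w > 0" by (simp add: w_def)
  define \<delta> where "\<delta> = 2/w"
  have dpos: "\<delta> > 0" using w by (simp add: \<delta>_def)
  define c where "c = min (1/(4*w)) (\<delta> * sqrt \<alpha> / 2)"
  have cpos: "c > 0" using w dpos apos by (simp add: c_def)
  have c1: "16 * c^2 * w^2 \<le> 1"
  proof -
    have "4 * w * c \<le> 1" using w by (simp add: c_def min_def field_simps split: if_splits)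
    then have "(4 * w * c)^2 \<le> 1^2" using w cpos by (intro power_mono) auto
    then show ?thesis by (simp add: power_mult_distrib ac_simps)
  qed
  have c2: "4*c^2 \<le> \<alpha> * \<delta>^2"
  proof -
    have "2 * c \<le> \<delta> * sqrt \<alpha>" by (simp add: c_def min_def split: if_splits)
    then have "(2 * c)^2 \<le> (\<delta> * sqrt \<alpha>)^2" using cpos by (intro power_mono) auto
    then show ?thesis using apos by (simp add: power_mult_distrib mult.commute)
  qed
  define b where "b = (1+e)/(1+2*e)"
  have b: "0 < b" "b < 1" using e by (auto simp: b_def field_simps)
  have lim: "(\<lambda>n. real n * b^n + b^n) \<longlonglongrightarrow> 0 + 0"
    using b by (intro tendsto_add powser_times_n_limit_0 LIMSEQ_power_zero) auto
  then have "eventually (\<lambda>n. real n * b^n + b^n < 1/2) sequentially"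
    by (intro order_tendstoD(2)) auto
  then obtain N0 where N0: "\<And>n. n \<ge> N0 \<Longrightarrow> real n * b^n + b^n < 1/2"
    unfolding eventually_sequentially by blast
  define n0 where "n0 = max 10 N0"
  show ?thesis
  proof (intro exI conjI allI impI)
    show "c > 0" by (rule cpos)
    show "n0 > 0" by (simp add: n0_def)
    fix n :: nat and y :: "nat \<Rightarrow> real"
    assume n: "n0 \<le> n" and y2: "(\<Sum>i<n. (y i)\<^sup>2) = 1"
    have n10: "n \<ge> 10" and nN0: "n \<ge> N0" using n by (auto simp: n0_def)
    define E' where "E' = {Q. (\<Sum>j<n. (vecmat n y Q j)^2) \<le> c^2 * n}"
    define Nr where "Nr = real (n choose (n div 2))"
    have Npos: "Nr > 0" unfolding Nr_def by simp
    have sub: "MM n \<inter> {Q. l2norm n (vecmat n y Q) \<le> c * sqrt (real n)} \<subseteq> MM n \<inter> E'"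
      using cpos unfolding E'_def by (auto intro: l2_le)
    have finE': "finite (MM n \<inter> E')" using finite_MM by auto
    have "measure_pmf.prob (random_Q n) {Q. l2norm n (vecmat n y Q) \<le> c * sqrt (real n)}
          = real (card (MM n \<inter> {Q. l2norm n (vecmat n y Q) \<le> c * sqrt (real n)})) / Nr^n"
      unfolding prob_Q Nr_def ..
    also have "\<dots> \<le> real (card (MM n \<inter> E')) / Nr^n"
      using sub finE' Npos by (intro divide_right_mono) (auto intro: card_mono)
    also have "\<dots> \<le> (1/2 + \<epsilon>)^n"
    proof (cases "\<exists>i0<n. \<delta> \<le> \<bar>y i0\<bar>")
      case True
      then obtain i0 where i0: "i0 < n" "\<delta> \<le> \<bar>y i0\<bar>" by auto
      have "card (MM n \<inter> E') \<le> card (bal_rows n)^(n-1) * (\<Sum>k\<le>nat \<lfloor>\<alpha> * n\<rfloor>. n choose k)"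
        unfolding E'_def by (rule caseA_count[where y=y and n=n and c=c and \<alpha>=\<alpha> and \<delta>=\<delta>, OF i0(1) dpos i0(2) c2])
      then have "real (card (MM n \<inter> E')) \<le> Nr^(n-1) * real (\<Sum>k\<le>nat \<lfloor>\<alpha> * n\<rfloor>. n choose k)"
        unfolding Nr_def card_bal by (metis of_nat_le_iff of_nat_mult of_nat_power)
      also have "\<dots> \<le> Nr^(n-1) * (1+e)^n" using Hb Npos by (intro mult_left_mono) auto
      finally have cA: "real (card (MM n \<inter> E')) \<le> Nr^(n-1) * (1+e)^n" .
      have "real (card (MM n \<inter> E')) / Nr^n \<le> Nr^(n-1) * (1+e)^n / Nr^n"
        using cA Npos by (intro divide_right_mono) auto
      also have "Nr^(n-1) * (1+e)^n / Nr^n = (1+e)^n / Nr"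
      proof -
        have "Nr^n = Nr^(n-1) * Nr" using n10 by (metis Suc_diff_1 less_le_trans zero_less_numeral power_Suc2 less_numeral_extra(1)[THEN less_le_trans])
        then show ?thesis using Npos by simp
      qed
      also have "\<dots> \<le> (1+e)^n * (2*(n+1)) / 2^n"
      proof -
        have "2^n \<le> Nr * (2*(n+1))" unfolding Nr_def by (rule N_lower)
        then have "(1+e)^n * 2^n \<le> (1+e)^n * (Nr * (2*(n+1)))" using e by (intro mult_left_mono) auto
        then show ?thesis using Npos by (simp add: field_simps)
      qed
      also have "\<dots> = (2 * (real n * b^n + b^n)) * ((1+2*e)/2)^n"
      proof -
        have eq: "(1+e)^n = b^n * (1+2*e)^n" using e by (simp add: b_def power_divide)
        have p: "((1+2*e)/2)^n = (1+2*e)^n / 2^n" by (rule power_divide)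
        show ?thesis unfolding p eq by (simp add: field_simps)
      qed
      also have "\<dots> \<le> 1 * ((1+2*e)/2)^n"
        using N0[OF nN0] e by (intro mult_right_mono) auto
      also have "\<dots> \<le> (1/2 + \<epsilon>)^n"
      proof -
        have "(1+2*e)/2 \<le> 1/2 + \<epsilon>" using e by simp
        then have "((1+2*e)/2)^n \<le> (1/2 + \<epsilon>)^n" using e by (intro power_mono) auto
        then show ?thesis by simp
      qed
      finally show ?thesis .
    next
      case False
      then have yb: "\<And>i. i < n \<Longrightarrow> \<bar>y i\<bar> * w \<le> 2"
        using w by (auto simp: \<delta>_def field_simps not_le)
      define \<eta> :: real where "\<eta> = 1/2^20"
      have eta: "2^n * 8 * exp 3 / w \<le> 2^n * \<eta>"
      proof -
        have "8 * exp 3 / w \<le> 8 * 27 / w" using exp3_le w by (intro divide_right_mono) auto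
        also have "\<dots> \<le> \<eta>" by (simp add: w_def \<eta>_def)
        finally have "8 * exp 3 / w \<le> \<eta>" .
        then have "2^n * (8 * exp 3 / w) \<le> 2^n * \<eta>" by (intro mult_left_mono) auto
        then show ?thesis by (simp add: mult.assoc)
      qed
      have eta1: "\<eta> \<le> 1" by (simp add: \<eta>_def)
      define h where "h = n div 2"
      have hn: "h \<le> n" by (simp add: h_def)
      have cB: "real (card (MM n \<inter> E')) \<le> 2^h * (2^n)^h * \<eta>^(h - n div 10) * real ((n-h) choose ((n-h) div 2))^n"
        unfolding E'_def by (rule caseB_count[OF w y2 yb c1 eta eta1 hn])
      have DN: "2^h * real ((n-h) choose ((n-h) div 2)) \<le> 4 * Nr"
        unfolding h_def Nr_def using n10 by (intro DN_bound) auto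
      have "2^h * (2^n)^h * \<eta>^(h - n div 10) * real ((n-h) choose ((n-h) div 2))^n
            = 2^h * \<eta>^(h - n div 10) * (2^h * real ((n-h) choose ((n-h) div 2)))^n"
        by (simp add: power_mult_distrib power_mult[symmetric] mult.commute mult.left_commute)
      also have "\<dots> \<le> 2^h * \<eta>^(h - n div 10) * (4 * Nr)^n"
        using DN by (intro mult_left_mono power_mono) (auto simp: \<eta>_def)
      finally have "real (card (MM n \<inter> E')) \<le> 2^h * \<eta>^(h - n div 10) * (4 * Nr)^n" using cB by linarith
      then have "real (card (MM n \<inter> E')) / Nr^n \<le> 2^h * \<eta>^(h - n div 10) * (4 * Nr)^n / Nr^n"
        using Npos by (intro divide_right_mono) auto
      also have "\<dots> = 2^h * \<eta>^(h - n div 10) * 4^n" using Npos by (simp add: power_mult_distrib)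
      also have "\<dots> \<le> 2^n * (1/16^n) * 4^n"
      proof (intro mult_right_mono mult_mono)
        show "(2::real)^h \<le> 2^n" using hn by (intro power_increasing) auto
        have "4 * n \<le> 20 * (h - n div 10)" unfolding h_def by (rule div_arith[OF n10])
        then have "(2::real)^(4*n) \<le> 2^(20 * (h - n div 10))" by (intro power_increasing) auto
        then have "(16::real)^n \<le> (2^20)^(h - n div 10)" by (simp add: power_mult)
        then show "\<eta>^(h - n div 10) \<le> 1/16^n" by (simp add: \<eta>_def power_one_over field_simps)
      qed (auto simp: \<eta>_def)
      also have "\<dots> = (1/2)^n" by (simp add: power_one_over field_simps power_mult_distrib[symmetric])
      also have "\<dots> \<le> (1/2 + \<epsilon>)^n" using assms by (intro power_mono) auto
      finally show ?thesis .
    qed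
    finally show "measure_pmf.prob (random_Q n) {Q. l2norm n (vecmat n y Q) \<le> c * sqrt (real n)} \<le> (1/2 + \<epsilon>)^n" .
  qed
qed

end
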